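(* Under the assumptions and notation of the $\textsc{Lars}$ iteration with $\beta_1=0,\lambda=0$ (blockwise smoothness constants $L_i$, layerwise variance bounds $\sigma_i^2$, minibatch of $b$ i.i.d. samples, $\alpha_l\le\phi\le\alpha_u$, constant step size $\eta_t$), each step satisfies $$\mathbb{E}[f(x_{t+1})\mid x_t] \le f(x_t) - \eta_t\alpha_l\sum_{i=1}^h\|\nabla_i f(x_t)\| + 2\eta_t\alpha_u\frac{\|\sigma\|_1}{\sqrt b}+\frac{\eta_t^2\alpha_u^2}{2}\|L\|_1 .$$
   Context: $f(x)=\mathbb{E}_{s\sim\mathbb{P}}[\ell(x,s)]$ with $x\in\mathbb{R}^d$ split into $h$ blocks $x^{(i)}\in\mathbb{R}^{d_i}$; $\nabla_i f$ is the gradient w.r.t. block $i$. Assumptions: $\|\nabla_i\ell(x,s)-\nabla_i\ell(y,s)\|\le L_i\|x^{(i)}-y^{(i)}\|$ for all $x,y,s,i$, $L=(L_1,\dots,L_h)^\top$; $\mathbb{E}\|\nabla_i\ell(x,s)-\nabla_i f(x)\|^2\le\sigma_i^2$, $\sigma=(\sigma_1,\dots,\sigma_h)^\top$. The iteration is $x_{t+1}^{(i)}=x_t^{(i)}-\eta_t\phi(\|x_t^{(i)}\|)g_t^{(i)}/\|g_t^{(i)}\|$ for $i\in[h]$, where $g_t=\frac1b\sum_{s\in\mathcal{S}_t}\nabla\ell(x_t,s)$ with $\mathcal{S}_t$ a set of $b$ i.i.d. samples from $\mathbb{P}$ independent of the past, $g_t^{(i)}\neq0$, and $\phi:\mathbb{R}^+\to\mathbb{R}^+$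 satisfies $0<\alpha_l\le\phi(v)\le\alpha_u$. $\|\cdot\|$ is Euclidean, $\|\cdot\|_1$ is $\ell_1$. *)

theory Defs
  imports "HOL-Probability.Probability"
begin

text \<open>The block x^(i) is represented by the vector that agrees with x on S and is 0 elsewhere,
  so its Euclidean norm is the Euclidean norm of x^(i).\<close>
definition blk :: "'n set \<Rightarrow> real ^ 'n \<Rightarrow> real ^ 'n" where
  "blk S x = (\<chi> j. if j \<in> S then x $ j else 0)"

definition minibatch_grad ::
  "(real ^ 'n \<Rightarrow> 's \<Rightarrow> real ^ 'n) \<Rightarrow> nat \<Rightarrow> real ^ 'n \<Rightarrow> (nat \<Rightarrow> 's) \<Rightarrow> real ^ 'n" where
  "minibatch_grad G b x S = (1 / real b) *\<^sub>R (\<Sum>k<b. G x (S k))"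

definition lars_step ::
  "('n set) list \<Rightarrow> real \<Rightarrow> (real \<Rightarrow> real) \<Rightarrow> real ^ 'n \<Rightarrow> real ^ 'n \<Rightarrow> real ^ 'n" where
  "lars_step Bs \<eta> \<phi> x g =
     x - (\<Sum>i<length Bs. (\<eta> * \<phi> (norm (blk (Bs ! i) x)) / norm (blk (Bs ! i) g)) *\<^sub>R blk (Bs ! i) g)"

end

theory Submission imports Defs begin

lemma blk_nth: "blk S x $ j = (if j \<in> S then x $ j else 0)"
  by (simp add: blk_def)

lemma blk_add: "blk S (x + y) = blk S x + blk S y"
  by (simp add: vec_eq_iff blk_nth)
lemma blk_diff: "blk S (x - y) = blk S x - blk S y"
  by (simp add: vec_eq_iff blk_nth)
lemma blk_minus: "blk S (- x) = - blk S x"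
  by (simp add: vec_eq_iff blk_nth)
lemma blk_scaleR: "blk S (c *\<^sub>R x) = c *\<^sub>R blk S x"
  by (simp add: vec_eq_iff blk_nth)
lemma blk_zero: "blk S 0 = 0"
  by (simp add: vec_eq_iff blk_nth)
lemma blk_sum: "blk S (sum f A) = (\<Sum>a\<in>A. blk S (f a))"
  by (induction A rule: infinite_finite_induct) (auto simp: blk_zero blk_add)
lemma blk_blk: "blk A (blk B v) = blk (A \<inter> B) v"
  by (simp add: vec_eq_iff blk_nth)

lemma norm_blk_le: "norm (blk S x) \<le> norm x"
  unfolding norm_vec_def
  by (rule L2_set_mono) (auto simp: blk_nth)

lemma bounded_linear_blk: "bounded_linear (blk S)"
  by (rule bounded_linearI') (auto simp: blk_add blk_scaleR)

lemma one_block: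
  assumes disj: "\<forall>i<length Bs. \<forall>j<length Bs. i \<noteq> j \<longrightarrow> Bs ! i \<inter> Bs ! j = {}"
    and cover: "(\<Union>i<length Bs. Bs ! i) = UNIV"
  shows "(\<Sum>i<length Bs. (if j \<in> Bs ! i then c else 0)) = (c::'a::comm_monoid_add)"
proof -
  obtain i0 where i0: "i0 < length Bs" "j \<in> Bs ! i0" using cover by blast
  have "{i. i < length Bs \<and> j \<in> Bs ! i} = {i0}"
    using i0 disj by blast
  then have "(\<Sum>i<length Bs. (if j \<in> Bs ! i then c else 0)) = (\<Sum>i\<in>{i0}. c)"
    by (simp add: sum.If_cases lessThan_def Collect_conj_eq[symmetric])
  then show ?thesis by simp
qed

lemma sum_blk:
  assumes disj: "\<forall>i<length Bs. \<forall>j<length Bs. i \<noteq> j \<longrightarrow> Bs ! i \<inter> Bs ! j = {}"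
    and cover: "(\<Union>i<length Bs. Bs ! i) = UNIV"
  shows "(\<Sum>i<length Bs. blk (Bs ! i) v) = v"
  by (simp add: vec_eq_iff blk_nth sum_component one_block[OF disj cover])

lemma inner_blocks:
  assumes disj: "\<forall>i<length Bs. \<forall>j<length Bs. i \<noteq> j \<longrightarrow> Bs ! i \<inter> Bs ! j = {}"
    and cover: "(\<Union>i<length Bs. Bs ! i) = UNIV"
  shows "u \<bullet> v = (\<Sum>i<length Bs. blk (Bs ! i) u \<bullet> blk (Bs ! i) v)"
proof -
  have "(\<Sum>i<length Bs. blk (Bs ! i) u \<bullet> blk (Bs ! i) v)
     = (\<Sum>i<length Bs. \<Sum>j\<in>UNIV. (if j \<in> Bs ! i then u $ j * v $ j else 0))"
    by (simp add: inner_vec_def blk_nth if_distrib cong: if_cong)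
  also have "\<dots> = (\<Sum>j\<in>UNIV. \<Sum>i<length Bs. (if j \<in> Bs ! i then u $ j * v $ j else 0))"
    by (rule sum.swap)
  also have "\<dots> = u \<bullet> v"
    by (simp add: one_block[OF disj cover] inner_vec_def)
  finally show ?thesis by simp
qed

lemma inner_blk_left: "blk S u \<bullet> v = blk S u \<bullet> blk S v"
  unfolding inner_vec_def by (rule sum.cong) (auto simp: blk_nth)

lemma norm_sq_blocks:
  assumes disj: "\<forall>i<length Bs. \<forall>j<length Bs. i \<noteq> j \<longrightarrow> Bs ! i \<inter> Bs ! j = {}"
    and cover: "(\<Union>i<length Bs. Bs ! i) = UNIV"
  shows "(norm v)\<^sup>2 = (\<Sum>i<length Bs. (norm (blk (Bs ! i) v))\<^sup>2)"
  using inner_blocks[OF disj cover, of v v] by (simp add: power2_norm_eq_inner)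

lemma norm_le_sum_blk:
  assumes disj: "\<forall>i<length Bs. \<forall>j<length Bs. i \<noteq> j \<longrightarrow> Bs ! i \<inter> Bs ! j = {}"
    and cover: "(\<Union>i<length Bs. Bs ! i) = UNIV"
  shows "norm v \<le> (\<Sum>i<length Bs. norm (blk (Bs ! i) v))"
  using norm_sum[of "\<lambda>i. blk (Bs ! i) v" "{..<length Bs}"] sum_blk[OF disj cover, of v] by simp


lemma descent_two_sided:
  fixes l :: "real^'n \<Rightarrow> real" and g :: "real^'n \<Rightarrow> real^'n"
  assumes deriv: "\<forall>y. (l has_derivative (\<lambda>v. g y \<bullet> v)) (at y)"
    and lip: "\<forall>i<length Bs. \<forall>y z. norm (blk (Bs!i) (g y) - blk (Bs!i) (g z)) \<le> L i * norm (blk (Bs!i) (y - z))"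
    and disj: "\<forall>i<length Bs. \<forall>j<length Bs. i \<noteq> j \<longrightarrow> Bs ! i \<inter> Bs ! j = {}"
    and cover: "(\<Union>i<length Bs. Bs ! i) = UNIV"
  shows "\<bar>l (y + d) - l y - g y \<bullet> d\<bar> \<le> (\<Sum>i<length Bs. \<bar>L i\<bar> * (norm (blk (Bs!i) d))\<^sup>2) / 2"
proof -
  define K where "K = (\<Sum>i<length Bs. \<bar>L i\<bar> * (norm (blk (Bs!i) d))\<^sup>2)"
  have key: "\<bar>(g (y + t *\<^sub>R d) - g y) \<bullet> d\<bar> \<le> t * K" if t: "0 \<le> t" for t
  proof -
    have "\<bar>(g (y + t *\<^sub>R d) - g y) \<bullet> d\<bar>
       = \<bar>\<Sum>i<length Bs. blk (Bs!i) (g (y + t *\<^sub>R d) - g y) \<bullet> blk (Bs!i) d\<bar>"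
      by (subst inner_blocks[OF disj cover]) (rule refl)
    also have "\<dots> \<le> (\<Sum>i<length Bs. \<bar>blk (Bs!i) (g (y + t *\<^sub>R d) - g y) \<bullet> blk (Bs!i) d\<bar>)"
      by (rule sum_abs)
    also have "\<dots> \<le> (\<Sum>i<length Bs. t * (\<bar>L i\<bar> * (norm (blk (Bs!i) d))\<^sup>2))"
    proof (rule sum_mono)
      fix i assume i: "i \<in> {..<length Bs}"
      have "\<bar>blk (Bs!i) (g (y + t *\<^sub>R d) - g y) \<bullet> blk (Bs!i) d\<bar>
          \<le> norm (blk (Bs!i) (g (y + t *\<^sub>R d) - g y)) * norm (blk (Bs!i) d)"
        by (rule Cauchy_Schwarz_ineq2)
      also have "\<dots> \<le> (L i * norm (blk (Bs!i) (y + t *\<^sub>R d - y))) * norm (blk (Bs!i) d)"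
      proof (rule mult_right_mono)
        show "norm (blk (Bs!i) (g (y + t *\<^sub>R d) - g y)) \<le> L i * norm (blk (Bs!i) (y + t *\<^sub>R d - y))"
          using lip i unfolding blk_diff by blast
      qed simp
      also have "\<dots> = L i * t * (norm (blk (Bs!i) d))\<^sup>2"
        using t by (simp add: blk_scaleR power2_eq_square)
      also have "\<dots> \<le> t * (\<bar>L i\<bar> * (norm (blk (Bs!i) d))\<^sup>2)"
      proof -
        have "L i * t \<le> \<bar>L i\<bar> * t" using t by (simp add: mult_right_mono)
        then have "L i * t * (norm (blk (Bs!i) d))\<^sup>2 \<le> \<bar>L i\<bar> * t * (norm (blk (Bs!i) d))\<^sup>2"
          by (rule mult_right_mono) simp
        then show ?thesis by (simp add: algebra_simps)
      qed
      finally show "\<bar>blk (Bs!i) (g (y + t *\<^sub>R d) - g y) \<bullet> blk (Bs!i) d\<bar> \<le> t * (\<bar>L i\<bar> * (norm (blk (Bs!i) d))\<^sup>2)" .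
    qed
    also have "\<dots> = t * K" by (simp add: K_def sum_distrib_left)
    finally show ?thesis .
  qed
  define h where "h t = l (y + t *\<^sub>R d) - t * (g y \<bullet> d)" for t
  have hd: "DERIV h t :> (g (y + t *\<^sub>R d) - g y) \<bullet> d" for t
  proof -
    have "((\<lambda>t. l (y + t *\<^sub>R d)) has_derivative (\<lambda>s. g (y + t *\<^sub>R d) \<bullet> (s *\<^sub>R d))) (at t)"
    proof (rule has_derivative_compose[of "\<lambda>t. y + t *\<^sub>R d" "\<lambda>s. s *\<^sub>R d" t UNIV l "\<lambda>v. g (y + t *\<^sub>R d) \<bullet> v"])
      show "((\<lambda>t. y + t *\<^sub>R d) has_derivative (\<lambda>s. s *\<^sub>R d)) (at t)"
        by (rule derivative_eq_intros refl | simp)+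
      show "(l has_derivative (\<lambda>v. g (y + t *\<^sub>R d) \<bullet> v)) (at (y + t *\<^sub>R d))"
        using deriv by blast
    qed
    moreover have "(\<lambda>s. g (y + t *\<^sub>R d) \<bullet> (s *\<^sub>R d)) = (*) (g (y + t *\<^sub>R d) \<bullet> d)"
      by (rule ext) (simp add: mult.commute)
    ultimately have "((\<lambda>t. l (y + t *\<^sub>R d)) has_field_derivative (g (y + t *\<^sub>R d) \<bullet> d)) (at t)"
      by (simp add: has_field_derivative_def)
    then have "DERIV h t :> g (y + t *\<^sub>R d) \<bullet> d - 1 * (g y \<bullet> d)"
      unfolding h_def by (intro DERIV_diff DERIV_cmult_right DERIV_ident) 
    then show ?thesis by (simp add: inner_diff_left)
  qed
  have sq: "DERIV (\<lambda>t. K / 2 * t\<^sup>2) t :> K * t" for t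
    by (auto intro!: derivative_eq_intros)
  have up: "h 1 - h 0 \<le> K / 2"
  proof -
    have "(\<lambda>t. h t - K / 2 * t\<^sup>2) 1 \<le> (\<lambda>t. h t - K / 2 * t\<^sup>2) 0"
    proof (rule DERIV_nonpos_imp_nonincreasing[of 0 1])
      fix t :: real assume "0 \<le> t" "t \<le> 1"
      then show "\<exists>y. DERIV (\<lambda>t. h t - K / 2 * t\<^sup>2) t :> y \<and> y \<le> 0"
      proof (intro exI conjI)
        show "DERIV (\<lambda>t. h t - K / 2 * t\<^sup>2) t :> (g (y + t *\<^sub>R d) - g y) \<bullet> d - K * t"
          by (rule DERIV_diff[OF hd sq])
        show "(g (y + t *\<^sub>R d) - g y) \<bullet> d - K * t \<le> 0"
          using key[of t] \<open>0 \<le> t\<close> by (simp add: abs_le_iff mult.commute)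
      qed
    qed simp
    then show ?thesis by simp
  qed
  have lo: "- (K / 2) \<le> h 1 - h 0"
  proof -
    have "(\<lambda>t. h t + K / 2 * t\<^sup>2) 0 \<le> (\<lambda>t. h t + K / 2 * t\<^sup>2) 1"
    proof (rule DERIV_nonneg_imp_nondecreasing[of 0 1])
      fix t :: real assume "0 \<le> t" "t \<le> 1"
      then show "\<exists>y. DERIV (\<lambda>t. h t + K / 2 * t\<^sup>2) t :> y \<and> y \<ge> 0"
      proof (intro exI conjI)
        show "DERIV (\<lambda>t. h t + K / 2 * t\<^sup>2) t :> (g (y + t *\<^sub>R d) - g y) \<bullet> d + K * t"
          by (rule DERIV_add[OF hd sq])
        show "(g (y + t *\<^sub>R d) - g y) \<bullet> d + K * t \<ge> 0"
          using key[of t] \<open>0 \<le> t\<close> by (simp add: abs_le_iff mult.commute)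
      qed
    qed simp
    then show ?thesis by simp
  qed
  have "h 1 - h 0 = l (y + d) - l y - g y \<bullet> d" by (simp add: h_def)
  then show ?thesis using up lo unfolding K_def abs_le_iff by (intro conjI) linarith+
qed


lemma block_ineq:
  fixes u w :: "real^'n"
  assumes "\<alpha>l \<le> p" "p \<le> \<alpha>u" "0 < \<eta>" "0 < \<alpha>l"
  shows "\<eta> * \<alpha>l * norm u - 2 * \<eta> * \<alpha>u * norm (w - u) \<le> \<eta> * p / norm w * (u \<bullet> w)"
proof (cases "w = 0")
  case True
  have "\<alpha>l * norm u \<le> 2 * \<alpha>u * norm u"
    using assms by (intro mult_right_mono) auto
  then have "\<eta> * (\<alpha>l * norm u) \<le> \<eta> * (2 * \<alpha>u * norm u)"
    using assms by (intro mult_left_mono) auto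
  then show ?thesis using True by (simp add: algebra_simps)
next
  case False
  then have nw: "norm w > 0" by simp
  define a where "a = (u \<bullet> w) / norm w"
  have "u \<bullet> w = w \<bullet> w + (u - w) \<bullet> w" by (simp add: inner_diff_left)
  moreover have "(u - w) \<bullet> w \<ge> - (norm (u - w) * norm w)"
    using Cauchy_Schwarz_ineq2[of "u - w" w] by linarith
  ultimately have "u \<bullet> w \<ge> norm w * norm w - norm (u - w) * norm w"
    by (simp add: power2_norm_eq_inner[symmetric] power2_eq_square)
  then have "a \<ge> norm w - norm (u - w)"
    unfolding a_def using nw by (simp add: field_simps)
  moreover have "norm u \<le> norm w + norm (u - w)"
    using norm_triangle_ineq[of w "u - w"] by simp
  moreover have "norm (u - w) = norm (w - u)" by (rule norm_minus_commute)
  ultimately have a1: "a \<ge> norm u - 2 * norm (w - u)" by linarith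
  have a2: "a \<le> norm u"
    unfolding a_def using nw Cauchy_Schwarz_ineq2[of u w] by (simp add: field_simps)
  have "\<alpha>l * norm u - 2 * \<alpha>u * norm (w - u) \<le> p * a"
  proof (cases "a \<ge> 0")
    case True
    have "\<alpha>l * a \<le> p * a" using True assms by (intro mult_right_mono) auto
    moreover have "\<alpha>l * (norm u - 2 * norm (w - u)) \<le> \<alpha>l * a"
      using a1 assms by (intro mult_left_mono) auto
    moreover have "\<alpha>l * norm (w - u) \<le> \<alpha>u * norm (w - u)"
      using assms by (intro mult_right_mono) auto
    ultimately show ?thesis by (simp add: algebra_simps)
  next
    case False
    have "\<alpha>u * a \<le> p * a" using False assms by (intro mult_right_mono_neg) auto
    moreover have "\<alpha>u * (norm u - 2 * norm (w - u)) \<le> \<alpha>u * a"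
      using a1 assms by (intro mult_left_mono) auto
    moreover have "\<alpha>l * norm u \<le> \<alpha>u * norm u"
      using assms by (intro mult_right_mono) auto
    ultimately show ?thesis by (simp add: algebra_simps)
  qed
  then have "\<eta> * (\<alpha>l * norm u - 2 * \<alpha>u * norm (w - u)) \<le> \<eta> * (p * a)"
    using assms by (intro mult_left_mono) auto
  then show ?thesis unfolding a_def by (simp add: algebra_simps)
qed

lemma blk_lars_diff:
  assumes disj: "\<forall>i<length Bs. \<forall>j<length Bs. i \<noteq> j \<longrightarrow> Bs ! i \<inter> Bs ! j = {}"
    and j: "j < length Bs"
  shows "blk (Bs ! j) (lars_step Bs \<eta> \<phi> x g - x)
    = - ((\<eta> * \<phi> (norm (blk (Bs ! j) x)) / norm (blk (Bs ! j) g)) *\<^sub>R blk (Bs ! j) g)"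
proof -
  have "blk (Bs ! j) (lars_step Bs \<eta> \<phi> x g - x)
      = - (\<Sum>i<length Bs. (\<eta> * \<phi> (norm (blk (Bs ! i) x)) / norm (blk (Bs ! i) g)) *\<^sub>R blk (Bs ! j \<inter> Bs ! i) g)"
    by (simp add: lars_step_def blk_minus blk_sum blk_scaleR blk_blk)
  also have "(\<Sum>i<length Bs. (\<eta> * \<phi> (norm (blk (Bs ! i) x)) / norm (blk (Bs ! i) g)) *\<^sub>R blk (Bs ! j \<inter> Bs ! i) g)
     = (\<Sum>i\<in>{j}. (\<eta> * \<phi> (norm (blk (Bs ! i) x)) / norm (blk (Bs ! i) g)) *\<^sub>R blk (Bs ! j \<inter> Bs ! i) g)"
  proof (rule sum.mono_neutral_right)
    show "\<forall>i\<in>{..<length Bs} - {j}. (\<eta> * \<phi> (norm (blk (Bs ! i) x)) / norm (blk (Bs ! i) g)) *\<^sub>R blk (Bs ! j \<inter> Bs ! i) g = 0"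
      using disj j by (auto simp: vec_eq_iff blk_nth)
  qed (use j in auto)
  finally show ?thesis by simp
qed

lemma pointwise:
  fixes f :: "real^'n \<Rightarrow> real"
  assumes disj: "\<forall>i<length Bs. \<forall>j<length Bs. i \<noteq> j \<longrightarrow> Bs ! i \<inter> Bs ! j = {}"
    and cover: "(\<Union>i<length Bs. Bs ! i) = UNIV"
    and phi: "\<forall>v\<ge>0. \<alpha>l \<le> \<phi> v \<and> \<phi> v \<le> \<alpha>u" and al: "0 < \<alpha>l" and eta: "0 < \<eta>"
    and desc: "\<forall>d. f (x + d) \<le> f x + gf \<bullet> d + (\<Sum>i<length Bs. \<bar>L i\<bar> * (norm (blk (Bs!i) d))\<^sup>2) / 2"
  shows "f (lars_step Bs \<eta> \<phi> x g) \<le> f x - \<eta> * \<alpha>l * (\<Sum>i<length Bs. norm (blk (Bs ! i) gf))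
      + 2 * \<eta> * \<alpha>u * (\<Sum>i<length Bs. norm (blk (Bs ! i) g - blk (Bs ! i) gf))
      + \<eta>\<^sup>2 * \<alpha>u\<^sup>2 / 2 * (\<Sum>i<length Bs. \<bar>L i\<bar>)"
proof -
  define d where "d = lars_step Bs \<eta> \<phi> x g - x"
  define c where "c i = \<eta> * \<phi> (norm (blk (Bs ! i) x)) / norm (blk (Bs ! i) g)" for i
  have bd: "blk (Bs ! i) d = - (c i *\<^sub>R blk (Bs ! i) g)" if "i < length Bs" for i
    unfolding d_def c_def using blk_lars_diff[OF disj that] .
  have ph: "\<alpha>l \<le> \<phi> (norm (blk (Bs ! i) x))" "\<phi> (norm (blk (Bs ! i) x)) \<le> \<alpha>u" for i
    using phi by auto
  have nd: "norm (blk (Bs ! i) d) \<le> \<eta> * \<alpha>u" if "i < length Bs" for i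
  proof (cases "blk (Bs ! i) g = 0")
    case True
    then show ?thesis using bd[OF that] eta al ph[of i] by simp
  next
    case False
    then have "norm (blk (Bs ! i) d) = \<eta> * \<phi> (norm (blk (Bs ! i) x))"
      using bd[OF that] eta al ph[of i] by (simp add: c_def)
    then show ?thesis using ph[of i] eta by simp
  qed
  have q: "(\<Sum>i<length Bs. \<bar>L i\<bar> * (norm (blk (Bs!i) d))\<^sup>2) / 2 \<le> \<eta>\<^sup>2 * \<alpha>u\<^sup>2 / 2 * (\<Sum>i<length Bs. \<bar>L i\<bar>)"
  proof -
    have "(\<Sum>i<length Bs. \<bar>L i\<bar> * (norm (blk (Bs!i) d))\<^sup>2) \<le> (\<Sum>i<length Bs. \<bar>L i\<bar> * (\<eta> * \<alpha>u)\<^sup>2)"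
    proof (rule sum_mono)
      fix i assume "i \<in> {..<length Bs}"
      then have "(norm (blk (Bs!i) d))\<^sup>2 \<le> (\<eta> * \<alpha>u)\<^sup>2"
        using nd by (intro power_mono) auto
      then show "\<bar>L i\<bar> * (norm (blk (Bs!i) d))\<^sup>2 \<le> \<bar>L i\<bar> * (\<eta> * \<alpha>u)\<^sup>2"
        by (intro mult_left_mono) auto
    qed
    then show ?thesis by (simp add: sum_distrib_right[symmetric] power_mult_distrib algebra_simps)
  qed
  have lin: "gf \<bullet> d \<le> - (\<eta> * \<alpha>l * (\<Sum>i<length Bs. norm (blk (Bs ! i) gf)))
      + 2 * \<eta> * \<alpha>u * (\<Sum>i<length Bs. norm (blk (Bs ! i) g - blk (Bs ! i) gf))"
  proof -
    have "gf \<bullet> d = (\<Sum>i<length Bs. blk (Bs ! i) gf \<bullet> blk (Bs ! i) d)"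
      by (rule inner_blocks[OF disj cover])
    also have "\<dots> = (\<Sum>i<length Bs. - (c i * (blk (Bs ! i) gf \<bullet> blk (Bs ! i) g)))"
      by (rule sum.cong) (auto simp: bd)
    also have "\<dots> \<le> (\<Sum>i<length Bs. - (\<eta> * \<alpha>l * norm (blk (Bs ! i) gf))
         + 2 * \<eta> * \<alpha>u * norm (blk (Bs ! i) g - blk (Bs ! i) gf))"
    proof (rule sum_mono)
      fix i assume "i \<in> {..<length Bs}"
      show "- (c i * (blk (Bs ! i) gf \<bullet> blk (Bs ! i) g)) \<le> - (\<eta> * \<alpha>l * norm (blk (Bs ! i) gf))
         + 2 * \<eta> * \<alpha>u * norm (blk (Bs ! i) g - blk (Bs ! i) gf)"
        using block_ineq[OF ph(1)[of i] ph(2)[of i] eta al, of "blk (Bs ! i) gf" "blk (Bs ! i) g"]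
        unfolding c_def by linarith
    qed
    also have "\<dots> = - (\<eta> * \<alpha>l * (\<Sum>i<length Bs. norm (blk (Bs ! i) gf)))
      + 2 * \<eta> * \<alpha>u * (\<Sum>i<length Bs. norm (blk (Bs ! i) g - blk (Bs ! i) gf))"
      by (simp add: sum.distrib sum_distrib_left sum_negf sum_subtractf)
    finally show ?thesis .
  qed
  have "f (lars_step Bs \<eta> \<phi> x g) = f (x + d)" by (simp add: d_def)
  also have "\<dots> \<le> f x + gf \<bullet> d + (\<Sum>i<length Bs. \<bar>L i\<bar> * (norm (blk (Bs!i) d))\<^sup>2) / 2"
    using desc by blast
  finally show ?thesis using q lin by linarith
qed


lemma sq_integrable_facts:
  fixes Z :: "'s \<Rightarrow> real^'n"
  assumes P: "prob_space P" and Zm: "Z \<in> borel_measurable P"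
    and v: "(\<integral>\<^sup>+ s. ennreal ((norm (Z s))\<^sup>2) \<partial>P) \<le> ennreal s2" and s2: "0 \<le> s2"
  shows "integrable P (\<lambda>s. (norm (Z s))\<^sup>2)" "(\<integral>s. (norm (Z s))\<^sup>2 \<partial>P) \<le> s2" "integrable P Z"
proof -
  interpret prob_space P by fact
  have m2: "(\<lambda>s. (norm (Z s))\<^sup>2) \<in> borel_measurable P" using Zm by measurable
  have "(\<integral>\<^sup>+ s. ennreal (norm ((norm (Z s))\<^sup>2)) \<partial>P) < \<infinity>"
    using v by (simp add: order.strict_trans1)
  then show i2: "integrable P (\<lambda>s. (norm (Z s))\<^sup>2)"
    using m2 by (simp add: integrable_iff_bounded)
  have "ennreal (\<integral>s. (norm (Z s))\<^sup>2 \<partial>P) \<le> ennreal s2"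
    using v nn_integral_eq_integral[OF i2] by simp
  then show "(\<integral>s. (norm (Z s))\<^sup>2 \<partial>P) \<le> s2"
    using s2 by (simp add: ennreal_le_iff)
  have "integrable P (\<lambda>s. 1 + (norm (Z s))\<^sup>2)" using i2 by simp
  then have "integrable P (\<lambda>s. norm (Z s))"
  proof (rule Bochner_Integration.integrable_bound)
    show "(\<lambda>s. norm (Z s)) \<in> borel_measurable P" using Zm by measurable
    have "t \<le> 1 + t\<^sup>2" for t :: real
    proof (cases "t \<le> 1")
      case True then show ?thesis by (simp add: add_increasing2)
    next
      case False
      then have "t * 1 \<le> t * t" by (intro mult_left_mono) auto
      then show ?thesis by (simp add: power2_eq_square)
    qed
    then show "AE s in P. norm (norm (Z s)) \<le> norm (1 + (norm (Z s))\<^sup>2)" by simp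
  qed
  then show "integrable P Z" using Zm integrable_norm_iff by blast
qed

lemma jensen_sqrt:
  fixes X :: "'a \<Rightarrow> real"
  assumes P: "prob_space M" and Xm: "X \<in> borel_measurable M"
    and i2: "integrable M (\<lambda>x. (X x)\<^sup>2)"
  shows "integrable M X" "(\<integral>x. X x \<partial>M) \<le> sqrt (\<integral>x. (X x)\<^sup>2 \<partial>M)"
proof -
  interpret prob_space M by fact
  show iX: "integrable M X"
    using square_integrable_imp_integrable[OF Xm i2] .
  define c where "c = (\<integral>x. X x \<partial>M)"
  have "0 \<le> (\<integral>x. (X x - c)\<^sup>2 \<partial>M)" by simp
  also have "(\<integral>x. (X x - c)\<^sup>2 \<partial>M) = (\<integral>x. (X x)\<^sup>2 - 2 * c * X x + c\<^sup>2 \<partial>M)"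
    by (simp add: power2_eq_square algebra_simps)
  also have "\<dots> = (\<integral>x. (X x)\<^sup>2 \<partial>M) - 2 * c * c + c\<^sup>2"
    using iX i2 by (simp add: c_def prob_space)
  finally have "c\<^sup>2 \<le> (\<integral>x. (X x)\<^sup>2 \<partial>M)" by (simp add: power2_eq_square)
  then have "sqrt (c\<^sup>2) \<le> sqrt (\<integral>x. (X x)\<^sup>2 \<partial>M)" by (rule real_sqrt_le_mono)
  then show "(\<integral>x. X x \<partial>M) \<le> sqrt (\<integral>x. (X x)\<^sup>2 \<partial>M)" unfolding c_def by simp
qed


lemma indep_components:
  fixes F H :: "'s \<Rightarrow> real" and b k l :: nat
  assumes P: "prob_space P" and kl: "k < b" "l < b" "k \<noteq> l"
    and Fm: "F \<in> borel_measurable P" and Hm: "H \<in> borel_measurable P"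
  shows "prob_space.indep_var (PiM {..<b} (\<lambda>_. P)) borel (\<lambda>S. F (S k)) borel (\<lambda>S. H (S l))"
proof -
  let ?Q = "PiM {..<b} (\<lambda>_. P)"
  interpret Q: prob_space ?Q using P by (intro prob_space_PiM)
  define X where "X i S = S (if i < b then i else 0)" for i :: nat and S :: "nat \<Rightarrow> 's"
  have mc: "(\<lambda>S. S j) \<in> measurable ?Q P" if "j < b" for j
    using measurable_component_singleton[of j "{..<b}" "\<lambda>_. P"] that by simp
  have rv: "X i \<in> measurable ?Q P" for i
    unfolding X_def using kl by (cases "i < b") (auto intro: mc)
  have "distr ?Q (PiM {..<b} (\<lambda>_. P)) (\<lambda>x. \<lambda>i\<in>{..<b}. X i x) = distr ?Q ?Q (\<lambda>x. x)"
    by (rule distr_cong) (auto simp: X_def space_PiM PiE_def extensional_def fun_eq_iff)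
  also have "\<dots> = ?Q" by simp
  also have "?Q = (\<Pi>\<^sub>M i\<in>{..<b}. distr ?Q P (X i))"
  proof (rule PiM_cong)
    fix i assume i: "i \<in> {..<b}"
    have "distr ?Q P (X i) = distr ?Q P (\<lambda>S. S i)"
      by (rule distr_cong) (use i in \<open>auto simp: X_def\<close>)
    also have "\<dots> = P" using i P by (intro distr_PiM_component) auto
    finally show "P = distr ?Q P (X i)" by simp
  qed simp
  finally have "Q.indep_vars (\<lambda>_. P) X {..<b}"
    using kl by (subst Q.indep_vars_iff_distr_eq_PiM) (auto simp: rv)
  from Q.indep_var_restrict[OF this, of "{k}" "{l}"] kl
  have "Q.indep_var (PiM {k} (\<lambda>_. P)) (\<lambda>\<omega>. restrict (\<lambda>i. X i \<omega>) {k}) (PiM {l} (\<lambda>_. P)) (\<lambda>\<omega>. restrict (\<lambda>i. X i \<omega>) {l})"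
    by auto
  then have "Q.indep_var borel ((\<lambda>f. F (f k)) \<circ> (\<lambda>\<omega>. restrict (\<lambda>i. X i \<omega>) {k})) borel ((\<lambda>f. H (f l)) \<circ> (\<lambda>\<omega>. restrict (\<lambda>i. X i \<omega>) {l}))"
    by (rule Q.indep_var_compose) (use Fm Hm in measurable)
  moreover have "((\<lambda>f. F (f k)) \<circ> (\<lambda>\<omega>. restrict (\<lambda>i. X i \<omega>) {k})) = (\<lambda>S. F (S k))"
    "((\<lambda>f. H (f l)) \<circ> (\<lambda>\<omega>. restrict (\<lambda>i. X i \<omega>) {l})) = (\<lambda>S. H (S l))"
    using kl by (auto simp: X_def fun_eq_iff)
  ultimately show ?thesis by simp
qed


lemma avg_bound:
  fixes Z :: "'s \<Rightarrow> real^'n" and b :: nat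
  assumes P: "prob_space P" and Zm: "Z \<in> borel_measurable P"
    and i2: "integrable P (\<lambda>s. (norm (Z s))\<^sup>2)" and iZ: "integrable P Z"
    and v: "(\<integral>s. (norm (Z s))\<^sup>2 \<partial>P) \<le> s2" and z0: "integral\<^sup>L P Z = 0" and b: "1 \<le> b"
  shows "integrable (PiM {..<b} (\<lambda>_. P)) (\<lambda>S. norm ((1 / real b) *\<^sub>R (\<Sum>k<b. Z (S k))))"
    "(\<integral>S. norm ((1 / real b) *\<^sub>R (\<Sum>k<b. Z (S k))) \<partial>PiM {..<b} (\<lambda>_. P)) \<le> sqrt (s2 / real b)"
proof -
  let ?Q = "PiM {..<b} (\<lambda>_. P)"
  interpret Q: prob_space ?Q using P by (intro prob_space_PiM)
  have mc: "(\<lambda>S. S j) \<in> measurable ?Q P" if "j < b" for j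
    using measurable_component_singleton[of j "{..<b}" "\<lambda>_. P"] that by simp
  have dc: "distr ?Q P (\<lambda>S. S j) = P" if "j < b" for j
    using that P by (intro distr_PiM_component) auto
  have int_comp: "integrable ?Q (\<lambda>S. g (S j)) \<and> (\<integral>S. g (S j) \<partial>?Q) = (\<integral>s. g s \<partial>P)"
    if "j < b" "g \<in> borel_measurable P" "integrable P g" for j and g :: "'s \<Rightarrow> real"
  proof
    show "integrable ?Q (\<lambda>S. g (S j))"
      using integrable_distr_eq[OF mc[OF that(1)] that(2)] dc[OF that(1)] that(3) by simp
    show "(\<integral>S. g (S j) \<partial>?Q) = (\<integral>s. g s \<partial>P)"
      using integral_distr[OF mc[OF that(1)] that(2)] dc[OF that(1)] by simp
  qed
  define V where "V = (\<integral>s. (norm (Z s))\<^sup>2 \<partial>P)"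
  have Zj0: "(\<integral>s. Z s $ j \<partial>P) = 0" for j
    using integral_bounded_linear[OF bounded_linear_vec_nth iZ, of j] z0 by simp
  have iZj: "integrable P (\<lambda>s. Z s $ j)" for j
    using integrable_bounded_linear[OF bounded_linear_vec_nth iZ] .
  have Zjm: "(\<lambda>s. Z s $ j) \<in> borel_measurable P" for j
    by (rule borel_measurable_continuous_on[OF continuous_on_component[OF continuous_on_id] Zm])
  have n2m: "(\<lambda>s. (norm (Z s))\<^sup>2) \<in> borel_measurable P" using Zm by measurable
  have trm: "integrable ?Q (\<lambda>S. Z (S k) \<bullet> Z (S l)) \<and>
      (\<integral>S. Z (S k) \<bullet> Z (S l) \<partial>?Q) = (if k = l then V else 0)"
    if kl: "k < b" "l < b" for k l
  proof (cases "k = l")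
    case True
    have e: "(\<lambda>S. Z (S k) \<bullet> Z (S l)) = (\<lambda>S. (norm (Z (S k)))\<^sup>2)"
      using True by (simp add: power2_norm_eq_inner)
    show ?thesis unfolding e using int_comp[OF kl(1) n2m i2] True by (simp add: V_def)
  next
    case False
    have pj: "integrable ?Q (\<lambda>S. Z (S k) $ j * Z (S l) $ j) \<and> (\<integral>S. Z (S k) $ j * Z (S l) $ j \<partial>?Q) = 0" for j
    proof -
      have ind: "Q.indep_var borel (\<lambda>S. Z (S k) $ j) borel (\<lambda>S. Z (S l) $ j)"
        by (rule indep_components[OF P kl False Zjm Zjm])
      have i1: "integrable ?Q (\<lambda>S. Z (S k) $ j)" and i2': "integrable ?Q (\<lambda>S. Z (S l) $ j)"
        using int_comp[OF kl(1) Zjm iZj] int_comp[OF kl(2) Zjm iZj] by auto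
      show ?thesis
        using Q.indep_var_lebesgue_integral[OF ind i1 i2'] Q.indep_var_integrable[OF ind i1 i2']
          int_comp[OF kl(1) Zjm iZj] int_comp[OF kl(2) Zjm iZj] Zj0 by simp
    qed
    have e: "(\<lambda>S. Z (S k) \<bullet> Z (S l)) = (\<lambda>S. \<Sum>j\<in>UNIV. Z (S k) $ j * Z (S l) $ j)"
      by (simp add: inner_vec_def)
    show ?thesis unfolding e using pj False
      by (simp add: Bochner_Integration.integral_sum)
  qed
  define W where "W S = (\<Sum>k<b. Z (S k))" for S
  have Wsq: "(norm (W S))\<^sup>2 = (\<Sum>k<b. \<Sum>l<b. Z (S k) \<bullet> Z (S l))" for S
    by (simp add: W_def power2_norm_eq_inner inner_sum_left inner_sum_right inner_commute)
  have iW2: "integrable ?Q (\<lambda>S. (norm (W S))\<^sup>2)"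
    unfolding Wsq using trm by (intro Bochner_Integration.integrable_sum) auto
  have EW2: "(\<integral>S. (norm (W S))\<^sup>2 \<partial>?Q) = real b * V"
  proof -
    have "(\<integral>S. (norm (W S))\<^sup>2 \<partial>?Q) = (\<Sum>k<b. \<Sum>l<b. (\<integral>S. Z (S k) \<bullet> Z (S l) \<partial>?Q))"
      unfolding Wsq
    proof (subst Bochner_Integration.integral_sum)
      show "integrable ?Q (\<lambda>S. \<Sum>l<b. Z (S k) \<bullet> Z (S l))" if "k \<in> {..<b}" for k
        using trm that by (intro Bochner_Integration.integrable_sum) auto
      show "(\<Sum>k<b. \<integral>S. (\<Sum>l<b. Z (S k) \<bullet> Z (S l)) \<partial>?Q) = (\<Sum>k<b. \<Sum>l<b. (\<integral>S. Z (S k) \<bullet> Z (S l) \<partial>?Q))"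
        using trm by (intro sum.cong refl Bochner_Integration.integral_sum) auto
    qed
    also have "\<dots> = (\<Sum>k<b. \<Sum>l<b. (if k = l then V else 0))"
      using trm by (intro sum.cong refl) auto
    also have "\<dots> = real b * V" by (simp add: sum.delta)
    finally show ?thesis .
  qed
  have Wm: "W \<in> borel_measurable ?Q"
    unfolding W_def by (intro borel_measurable_sum measurable_compose[OF mc Zm]) auto
  define X where "X S = norm (W S) / real b" for S
  have Xm: "X \<in> borel_measurable ?Q" unfolding X_def using Wm by measurable
  have X2: "(\<lambda>S. (X S)\<^sup>2) = (\<lambda>S. (norm (W S))\<^sup>2 / (real b)\<^sup>2)"
    by (simp add: X_def power_divide)
  have iX2: "integrable ?Q (\<lambda>S. (X S)\<^sup>2)" unfolding X2 using iW2 by simp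
  have EX2: "(\<integral>S. (X S)\<^sup>2 \<partial>?Q) = V / real b"
    unfolding X2 using EW2 b by (simp add: power2_eq_square)
  have eqn: "(\<lambda>S. norm ((1 / real b) *\<^sub>R (\<Sum>k<b. Z (S k)))) = X"
    by (simp add: X_def W_def fun_eq_iff divide_inverse mult.commute)
  note J = jensen_sqrt[OF Q.prob_space_axioms Xm iX2]
  show "integrable ?Q (\<lambda>S. norm ((1 / real b) *\<^sub>R (\<Sum>k<b. Z (S k))))"
    unfolding eqn by (rule J(1))
  have "V / real b \<le> s2 / real b" using v b by (simp add: V_def divide_right_mono)
  then have "sqrt (V / real b) \<le> sqrt (s2 / real b)" by simp
  then show "(\<integral>S. norm ((1 / real b) *\<^sub>R (\<Sum>k<b. Z (S k))) \<partial>?Q) \<le> sqrt (s2 / real b)"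
    unfolding eqn using J(2) EX2 by (metis order.trans)
qed


lemma borel_measurable_blk[measurable]:
  "f \<in> borel_measurable M \<Longrightarrow> (\<lambda>x. blk S (f x)) \<in> borel_measurable M"
  by (rule borel_measurable_continuous_on[OF linear_continuous_on[OF bounded_linear_blk]])

lemma lars_dist:
  assumes disj: "\<forall>i<length Bs. \<forall>j<length Bs. i \<noteq> j \<longrightarrow> Bs ! i \<inter> Bs ! j = {}"
    and cover: "(\<Union>i<length Bs. Bs ! i) = UNIV"
    and phi: "\<forall>v\<ge>0. \<alpha>l \<le> \<phi> v \<and> \<phi> v \<le> \<alpha>u" and eta: "0 < \<eta>" and al: "0 < \<alpha>l"
  shows "norm (lars_step Bs \<eta> \<phi> x g - x) \<le> real (length Bs) * (\<eta> * \<alpha>u)"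
proof -
  let ?d = "lars_step Bs \<eta> \<phi> x g - x"
  have ph: "\<alpha>l \<le> \<phi> (norm (blk (Bs ! i) x))" "\<phi> (norm (blk (Bs ! i) x)) \<le> \<alpha>u" for i
    using phi by auto
  have nd: "norm (blk (Bs ! i) ?d) \<le> \<eta> * \<alpha>u" if i: "i < length Bs" for i
  proof (cases "blk (Bs ! i) g = 0")
    case True
    have "0 \<le> \<alpha>u" using ph[of i] al by linarith
    then show ?thesis using blk_lars_diff[OF disj i] eta True by simp
  next
    case False
    then have "norm (blk (Bs ! i) ?d) = \<eta> * \<phi> (norm (blk (Bs ! i) x))"
      using blk_lars_diff[OF disj i, of \<eta> \<phi> x g] eta ph[of i] al by simp
    then show ?thesis using ph[of i] eta by simp
  qed
  have "norm ?d \<le> (\<Sum>i<length Bs. norm (blk (Bs ! i) ?d))" by (rule norm_le_sum_blk[OF disj cover])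
  also have "\<dots> \<le> (\<Sum>i<length Bs. \<eta> * \<alpha>u)" by (rule sum_mono) (use nd in auto)
  finally show ?thesis by simp
qed

theorem mainTheorem2:
  fixes P :: "'s measure"
    and loss :: "real ^ 'n \<Rightarrow> 's \<Rightarrow> real"
    and G :: "real ^ 'n \<Rightarrow> 's \<Rightarrow> real ^ 'n"
    and f :: "real ^ 'n \<Rightarrow> real"
    and Gf :: "real ^ 'n \<Rightarrow> real ^ 'n"
    and Bs :: "('n set) list"
    and L \<sigma> :: "nat \<Rightarrow> real"
    and \<phi> :: "real \<Rightarrow> real"
    and \<alpha>l \<alpha>u \<eta> :: real
    and b :: nat
    and x :: "real ^ 'n"
  assumes P: "prob_space P"
    and blocks_nonempty: "\<forall>i<length Bs. Bs ! i \<noteq> {}"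
    and blocks_disjoint: "\<forall>i<length Bs. \<forall>j<length Bs. i \<noteq> j \<longrightarrow> Bs ! i \<inter> Bs ! j = {}"
    and blocks_cover: "(\<Union>i<length Bs. Bs ! i) = UNIV"
    and loss_integrable: "\<forall>y. integrable P (loss y)"
    and f_def: "\<forall>y. f y = (\<integral>s. loss y s \<partial>P)"
    and loss_grad: "\<forall>y. \<forall>s\<in>space P. ((\<lambda>z. loss z s) has_derivative (\<lambda>v. G y s \<bullet> v)) (at y)"
    and grad_meas: "\<forall>y. G y \<in> borel_measurable P"
    and f_grad: "\<forall>y. (f has_derivative (\<lambda>v. Gf y \<bullet> v)) (at y)"
    and smooth: "\<forall>i<length Bs. \<forall>y z. \<forall>s\<in>space P.
         norm (blk (Bs ! i) (G y s) - blk (Bs ! i) (G z s)) \<le> L i * norm (blk (Bs ! i) (y - z))"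
    and variance: "\<forall>i<length Bs. \<forall>y.
         (\<integral>\<^sup>+ s. ennreal ((norm (blk (Bs ! i) (G y s) - blk (Bs ! i) (Gf y)))\<^sup>2) \<partial>P) \<le> ennreal ((\<sigma> i)\<^sup>2)"
    and phi_bounds: "0 < \<alpha>l" "\<forall>v\<ge>0. \<alpha>l \<le> \<phi> v \<and> \<phi> v \<le> \<alpha>u"
    and eta_pos: "0 < \<eta>"
    and b_pos: "1 \<le> b"
    and g_nonzero: "AE S in PiM {..<b} (\<lambda>_. P).
         \<forall>i<length Bs. blk (Bs ! i) (minibatch_grad G b x S) \<noteq> 0"
  shows "(\<integral>S. f (lars_step Bs \<eta> \<phi> x (minibatch_grad G b x S)) \<partial>(PiM {..<b} (\<lambda>_. P)))
         \<le> f x - \<eta> * \<alpha>l * (\<Sum>i<length Bs. norm (blk (Bs ! i) (Gf x)))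
             + 2 * \<eta> * \<alpha>u * (\<Sum>i<length Bs. \<bar>\<sigma> i\<bar>) / sqrt (real b)
             + \<eta>\<^sup>2 * \<alpha>u\<^sup>2 / 2 * (\<Sum>i<length Bs. \<bar>L i\<bar>)"
proof -
  interpret prob_space P by (rule P)
  let ?n = "length Bs"
  let ?Q = "PiM {..<b} (\<lambda>_. P)"
  interpret Q: prob_space ?Q using P by (intro prob_space_PiM)
  note disj = blocks_disjoint and cover = blocks_cover
  define Z where "Z i s = blk (Bs ! i) (G x s) - blk (Bs ! i) (Gf x)" for i s
  have Gm: "G x \<in> borel_measurable P" using grad_meas by blast
  have Zm: "Z i \<in> borel_measurable P" for i
    unfolding Z_def using Gm by measurable
  have Zf: "integrable P (\<lambda>s. (norm (Z i s))\<^sup>2) \<and> (\<integral>s. (norm (Z i s))\<^sup>2 \<partial>P) \<le> (\<sigma> i)\<^sup>2 \<and> integrable P (Z i)"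
    if i: "i < ?n" for i
    using sq_integrable_facts[OF P Zm[of i], of "(\<sigma> i)\<^sup>2"] variance i by (simp add: Z_def)
  have GZ: "G x s = Gf x + (\<Sum>i<?n. Z i s)" for s
    by (simp add: Z_def sum_subtractf sum_blk[OF disj cover])
  have iG: "integrable P (G x)"
  proof -
    have "integrable P (\<lambda>s. Gf x + (\<Sum>i<?n. Z i s))"
      using Zf by (intro Bochner_Integration.integrable_add Bochner_Integration.integrable_sum) auto
    then show ?thesis by (simp add: GZ[symmetric])
  qed
  define m where "m = (\<integral>s. G x s \<partial>P)"
  define K where "K h = (\<Sum>i<?n. \<bar>L i\<bar> * (norm (blk (Bs!i) h))\<^sup>2) / 2" for h
  have bound: "\<bar>f (x + h) - f x - m \<bullet> h\<bar> \<le> K h" for h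
  proof -
    have il: "integrable P (loss y)" for y using loss_integrable by blast
    have ii: "integrable P (\<lambda>s. G x s \<bullet> h)" using iG by simp
    have "f (x + h) - f x - m \<bullet> h = (\<integral>s. loss (x + h) s - loss x s - G x s \<bullet> h \<partial>P)"
      using f_def il ii iG by (simp add: m_def Bochner_Integration.integral_diff)
    also have "\<bar>\<dots>\<bar> \<le> (\<integral>s. K h \<partial>P)"
    proof -
      have iF: "integrable P (\<lambda>s. loss (x + h) s - loss x s - G x s \<bullet> h)"
        using il ii by auto
      have pt: "\<bar>loss (x + h) s - loss x s - G x s \<bullet> h\<bar> \<le> K h" if s: "s \<in> space P" for s
        unfolding K_def
      proof (rule descent_two_sided[of "\<lambda>z. loss z s" "\<lambda>z. G z s" Bs L x h, OF _ _ disj cover])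
        show "\<forall>y. ((\<lambda>z. loss z s) has_derivative (\<lambda>v. G y s \<bullet> v)) (at y)"
          using loss_grad s by blast
        show "\<forall>i<length Bs. \<forall>y z. norm (blk (Bs ! i) (G y s) - blk (Bs ! i) (G z s)) \<le> L i * norm (blk (Bs ! i) (y - z))"
          using smooth s by blast
      qed
      have "\<bar>\<integral>s. loss (x + h) s - loss x s - G x s \<bullet> h \<partial>P\<bar> \<le> (\<integral>s. \<bar>loss (x + h) s - loss x s - G x s \<bullet> h\<bar> \<partial>P)"
        using integral_norm_bound[of P "\<lambda>s. loss (x + h) s - loss x s - G x s \<bullet> h"] by simp
      also have "\<dots> \<le> (\<integral>s. K h \<partial>P)"
        by (rule integral_mono) (use iF pt in auto)
      finally show ?thesis .
    qed
    also have "\<dots> = K h" by (simp add: prob_space)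
    finally show ?thesis .
  qed
  have Kle: "K h \<le> (\<Sum>i<?n. \<bar>L i\<bar>) / 2 * (norm h)\<^sup>2" for h
  proof -
    have "(\<Sum>i<?n. \<bar>L i\<bar> * (norm (blk (Bs!i) h))\<^sup>2) \<le> (\<Sum>i<?n. \<bar>L i\<bar> * (norm h)\<^sup>2)"
      by (intro sum_mono mult_left_mono power_mono norm_blk_le) auto
    then show ?thesis unfolding K_def sum_distrib_right[symmetric] by (simp add: divide_right_mono)
  qed
  have mGf: "Gf x = m"
  proof -
    have "(f has_derivative (\<lambda>v. m \<bullet> v)) (at x)"
      unfolding has_derivative_iff_norm
    proof
      show "bounded_linear (\<lambda>v. m \<bullet> v)" by (rule bounded_linear_inner_right)
      let ?C = "(\<Sum>i<?n. \<bar>L i\<bar>) / 2"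
      show "((\<lambda>y. norm (f y - f x - m \<bullet> (y - x)) / norm (y - x)) \<longlongrightarrow> 0) (at x)"
      proof (rule Lim_null_comparison)
        show "\<forall>\<^sub>F y in at x. norm (norm (f y - f x - m \<bullet> (y - x)) / norm (y - x)) \<le> ?C * norm (y - x)"
        proof (rule always_eventually, rule allI)
          fix y
          have b1: "\<bar>f y - f x - m \<bullet> (y - x)\<bar> \<le> ?C * (norm (y - x))\<^sup>2"
            using bound[of "y - x"] Kle[of "y - x"] by simp
          show "norm (norm (f y - f x - m \<bullet> (y - x)) / norm (y - x)) \<le> ?C * norm (y - x)"
          proof (cases "y = x")
            case True then show ?thesis by simp
          next
            case False
            then have "norm (y - x) > 0" by simp
            then show ?thesis using b1 by (simp add: divide_le_eq power2_eq_square mult.assoc)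
          qed
        qed
        have "((\<lambda>y. ?C * norm (y - x)) \<longlongrightarrow> ?C * norm (x - x)) (at x)"
          by (intro tendsto_intros)
        then show "((\<lambda>y. ?C * norm (y - x)) \<longlongrightarrow> 0) (at x)" by simp
      qed
    qed
    from has_derivative_unique[OF f_grad[rule_format, of x] this]
    have "(\<lambda>v. Gf x \<bullet> v) = (\<lambda>v. m \<bullet> v)" .
    then have "Gf x \<bullet> (Gf x - m) = m \<bullet> (Gf x - m)" by meson
    then have "(Gf x - m) \<bullet> (Gf x - m) = 0" by (simp add: inner_diff_left)
    then show ?thesis by simp
  qed
  have Z0: "integral\<^sup>L P (Z i) = 0" for i
  proof -
    have "integrable P (\<lambda>s. blk (Bs ! i) (G x s))"
      by (rule integrable_bounded_linear[OF bounded_linear_blk iG])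
    then have "integral\<^sup>L P (Z i) = (\<integral>s. blk (Bs ! i) (G x s) \<partial>P) - blk (Bs ! i) (Gf x)"
      unfolding Z_def by (simp add: Bochner_Integration.integral_diff prob_space)
    also have "(\<integral>s. blk (Bs ! i) (G x s) \<partial>P) = blk (Bs ! i) m"
      unfolding m_def by (rule integral_bounded_linear[OF bounded_linear_blk iG])
    finally show ?thesis using mGf by simp
  qed
  have desc: "\<forall>d. f (x + d) \<le> f x + Gf x \<bullet> d + (\<Sum>i<length Bs. \<bar>L i\<bar> * (norm (blk (Bs!i) d))\<^sup>2) / 2"
  proof
    fix d
    have "\<bar>f (x + d) - f x - Gf x \<bullet> d\<bar> \<le> K d" using bound[of d] mGf by simp
    then show "f (x + d) \<le> f x + Gf x \<bullet> d + (\<Sum>i<length Bs. \<bar>L i\<bar> * (norm (blk (Bs!i) d))\<^sup>2) / 2"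
      unfolding K_def by linarith
  qed
  define g where "g S = minibatch_grad G b x S" for S
  define N where "N i S = norm ((1 / real b) *\<^sub>R (\<Sum>k<b. Z i (S k)))" for i S
  define A where "A = f x - \<eta> * \<alpha>l * (\<Sum>i<length Bs. norm (blk (Bs ! i) (Gf x)))
      + \<eta>\<^sup>2 * \<alpha>u\<^sup>2 / 2 * (\<Sum>i<length Bs. \<bar>L i\<bar>)"
  have gN: "blk (Bs ! i) (g S) - blk (Bs ! i) (Gf x) = (1 / real b) *\<^sub>R (\<Sum>k<b. Z i (S k))" for i S
  proof -
    have "(1 / real b) *\<^sub>R (\<Sum>k<b. Z i (S k))
        = (1 / real b) *\<^sub>R (\<Sum>k<b. blk (Bs ! i) (G x (S k))) - (1 / real b) *\<^sub>R (real b *\<^sub>R blk (Bs ! i) (Gf x))"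
    proof -
      have "(\<Sum>k<b. Z i (S k)) = (\<Sum>k<b. blk (Bs ! i) (G x (S k))) - (\<Sum>k<b. blk (Bs ! i) (Gf x))"
        unfolding Z_def by (rule sum_subtractf)
      also have "(\<Sum>k<b. blk (Bs ! i) (Gf x)) = real b *\<^sub>R blk (Bs ! i) (Gf x)"
        by (subst sum_constant_scaleR) simp
      finally show ?thesis by (simp only: scaleR_diff_right)
    qed
    also have "(1 / real b) *\<^sub>R (real b *\<^sub>R blk (Bs ! i) (Gf x)) = blk (Bs ! i) (Gf x)"
      using b_pos by (simp only: scaleR_scaleR) simp
    finally show ?thesis
      by (simp add: g_def minibatch_grad_def blk_scaleR blk_sum)
  qed
  have pw: "f (lars_step Bs \<eta> \<phi> x (g S)) \<le> A + 2 * \<eta> * \<alpha>u * (\<Sum>i<?n. N i S)" for S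
    using pointwise[OF disj cover phi_bounds(2) phi_bounds(1) eta_pos desc, where g="g S"] gN
    unfolding A_def N_def by (simp add: gN)
  have avg: "integrable ?Q (N i) \<and> integral\<^sup>L ?Q (N i) \<le> sqrt ((\<sigma> i)\<^sup>2 / real b)" if i: "i < ?n" for i
  proof -
    have z1: "integrable P (\<lambda>s. (norm (Z i s))\<^sup>2)" and z2: "(\<integral>s. (norm (Z i s))\<^sup>2 \<partial>P) \<le> (\<sigma> i)\<^sup>2"
      and z3: "integrable P (Z i)" using Zf[OF i] by auto
    show ?thesis using avg_bound[OF P Zm[of i] z1 z3 z2 Z0[of i] b_pos] unfolding N_def by auto
  qed
  have mc: "(\<lambda>S. S j) \<in> measurable ?Q P" if "j < b" for j
    using measurable_component_singleton[of j "{..<b}" "\<lambda>_. P"] that by simp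
  have gm: "g \<in> borel_measurable ?Q"
    unfolding g_def minibatch_grad_def
    by (intro borel_measurable_scaleR borel_measurable_const borel_measurable_sum measurable_compose[OF mc Gm]) auto
  have contf: "continuous_on UNIV f"
    using f_grad by (intro has_derivative_continuous_on) (auto intro: has_derivative_at_withinI)
  have lm: "(\<lambda>S. lars_step Bs \<eta> \<phi> x (g S)) \<in> borel_measurable ?Q"
    unfolding lars_step_def using gm by measurable
  have fm: "(\<lambda>S. f (lars_step Bs \<eta> \<phi> x (g S))) \<in> borel_measurable ?Q"
    by (rule borel_measurable_continuous_on[OF contf lm])
  define R where "R = real ?n * (\<eta> * \<alpha>u)"
  have "bounded (f ` cball x R)"
    by (intro compact_imp_bounded compact_continuous_image continuous_on_subset[OF contf] compact_cball) auto
  then obtain Bd where Bd: "\<forall>y\<in>f ` cball x R. \<bar>y\<bar> \<le> Bd" unfolding bounded_real by blast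
  have inl: "lars_step Bs \<eta> \<phi> x (g S) \<in> cball x R" for S
    using lars_dist[OF disj cover phi_bounds(2) eta_pos phi_bounds(1), of x "g S"]
    unfolding R_def by (simp add: dist_norm norm_minus_commute)
  have iL: "integrable ?Q (\<lambda>S. f (lars_step Bs \<eta> \<phi> x (g S)))"
    by (rule Q.integrable_const_bound[where B=Bd]) (use Bd inl fm in auto)
  have iR: "integrable ?Q (\<lambda>S. A + 2 * \<eta> * \<alpha>u * (\<Sum>i<?n. N i S))"
    using avg by (intro Bochner_Integration.integrable_add Bochner_Integration.integrable_mult_right
        Bochner_Integration.integrable_sum) auto
  have "(\<integral>S. f (lars_step Bs \<eta> \<phi> x (g S)) \<partial>?Q) \<le> (\<integral>S. A + 2 * \<eta> * \<alpha>u * (\<Sum>i<?n. N i S) \<partial>?Q)"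
    by (rule integral_mono[OF iL iR]) (rule pw)
  also have "\<dots> = A + 2 * \<eta> * \<alpha>u * (\<Sum>i<?n. integral\<^sup>L ?Q (N i))"
  proof -
    have iS: "integrable ?Q (\<lambda>S. \<Sum>i<?n. N i S)"
      using avg by (intro Bochner_Integration.integrable_sum) auto
    have "(\<integral>S. A + 2 * \<eta> * \<alpha>u * (\<Sum>i<?n. N i S) \<partial>?Q) = A + (\<integral>S. 2 * \<eta> * \<alpha>u * (\<Sum>i<?n. N i S) \<partial>?Q)"
      using iS by (subst Bochner_Integration.integral_add) (auto simp: Q.prob_space)
    also have "(\<integral>S. 2 * \<eta> * \<alpha>u * (\<Sum>i<?n. N i S) \<partial>?Q) = 2 * \<eta> * \<alpha>u * (\<integral>S. (\<Sum>i<?n. N i S) \<partial>?Q)"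
      by (rule integral_mult_right_zero)
    also have "(\<integral>S. (\<Sum>i<?n. N i S) \<partial>?Q) = (\<Sum>i<?n. integral\<^sup>L ?Q (N i))"
      using avg by (intro Bochner_Integration.integral_sum) auto
    finally show ?thesis .
  qed
  also have "\<dots> \<le> A + 2 * \<eta> * \<alpha>u * (\<Sum>i<?n. sqrt ((\<sigma> i)\<^sup>2 / real b))"
  proof -
    have "0 \<le> \<alpha>u" using phi_bounds by (meson order.trans less_imp_le order_refl)
    then have "0 \<le> 2 * \<eta> * \<alpha>u" using eta_pos by simp
    moreover have "(\<Sum>i<?n. integral\<^sup>L ?Q (N i)) \<le> (\<Sum>i<?n. sqrt ((\<sigma> i)\<^sup>2 / real b))"
      using avg by (intro sum_mono) auto
    ultimately show ?thesis by (simp add: mult_left_mono)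
  qed
  also have "(\<Sum>i<?n. sqrt ((\<sigma> i)\<^sup>2 / real b)) = (\<Sum>i<?n. \<bar>\<sigma> i\<bar>) / sqrt (real b)"
    by (simp add: real_sqrt_divide sum_divide_distrib)
  finally show ?thesis unfolding A_def g_def by (simp add: algebra_simps)
qed
end
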